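(* Let $M$ be a monoidal category, $C$ an $M$-actegory and $x,y\in C$. Every 2-cell $\theta:R_x\Rightarrow R_y$ in $\mathit{Tamb}_{C,M}$ is of the form $R_f$ for a unique morphism $f\in C(x,y)$. Similarly, every 2-cell $\theta:L_y\Rightarrow L_x$ in $\mathit{Tamb}_{M,C}$ is of the form $L_f$ for a unique $f\in C(x,y)$.
   Context: $(M,\otimes,I,\lambda,a)$ is a monoidal category; an $M$-actegory is a category $C$ with a functor $\odot:M\times C\to C$ and coherent natural isomorphisms $\lambda_x:I\odot x\to x$, $a_{m,n,x}:(m\otimes n)\odot x\to m\odot(n\odot x)$; $M$ is an $M$-actegory via $\otimes$. Composition is diagrammatic. For $M$-actegories $C,D$, $\mathit{Tamb}_{C,D}$ is the category of functors $P:C^{op}\times D\to\mathrm{Set}$ equipped with strength maps $P(c,d)\to P(m\odot c,m\odot d)$ natural in $c,d$, (di)natural in $m$ and compatible with unitors/associators, with morphisms (2-cells) the strength-preserving natural transformations. For $x\in C$, $R_x\in\mathit{Tamb}_{C,M}$ is $(c,n)\mapsto C(c,n\odot x)$ with strength $h\mapsto(m\odot h);a^{-1}_{m,n,x}$, and $L_x\in\mathit{Tamb}_{M,C}$ is $(n,c)\mapsto C(n\odot x,c)$ with strength $h\mapsto a_{m,n,x};(m\odot h)$. For $f:x\to y$ in $C$, $R_f:R_x\Rightarrow R_y$ is postcomposition with $n\odot f$, and $L_f:L_y\Rightarrow L_x$ is precomposition with $n\odot f$. *)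

theory Defs
  imports Main
begin

record ('o, 'a) cat =
  ob  :: "'o set"
  hom :: "'o \<Rightarrow> 'o \<Rightarrow> 'a set"
  cmp :: "'a \<Rightarrow> 'a \<Rightarrow> 'a"   (* cmp f g = f ; g  (first f, then g) *)
  idn :: "'o \<Rightarrow> 'a"

definition category :: "('o, 'a, 'z) cat_scheme \<Rightarrow> bool" where
  "category C \<longleftrightarrow>
     (\<forall>x y. (x \<notin> ob C \<or> y \<notin> ob C) \<longrightarrow> hom C x y = {}) \<and>
     (\<forall>x y x' y'. hom C x y \<inter> hom C x' y' \<noteq> {} \<longrightarrow> x = x' \<and> y = y') \<and>
     (\<forall>x\<in>ob C. idn C x \<in> hom C x x) \<and>
     (\<forall>x\<in>ob C. \<forall>y\<in>ob C. \<forall>z\<in>ob C. \<forall>f\<in>hom C x y. \<forall>g\<in>hom C y z.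
        cmp C f g \<in> hom C x z) \<and>
     (\<forall>x\<in>ob C. \<forall>y\<in>ob C. \<forall>f\<in>hom C x y.
        cmp C (idn C x) f = f \<and> cmp C f (idn C y) = f) \<and>
     (\<forall>w\<in>ob C. \<forall>x\<in>ob C. \<forall>y\<in>ob C. \<forall>z\<in>ob C.
        \<forall>f\<in>hom C w x. \<forall>g\<in>hom C x y. \<forall>h\<in>hom C y z.
        cmp C (cmp C f g) h = cmp C f (cmp C g h))"

definition iso_pair :: "('o, 'a, 'z) cat_scheme \<Rightarrow> 'a \<Rightarrow> 'a \<Rightarrow> 'o \<Rightarrow> 'o \<Rightarrow> bool" where
  "iso_pair C f g x y \<longleftrightarrow> f \<in> hom C x y \<and> g \<in> hom C y x \<and>
     cmp C f g = idn C x \<and> cmp C g f = idn C y"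

record ('m, 'b) moncat = "('m, 'b) cat" +
  tens   :: "'m \<Rightarrow> 'm \<Rightarrow> 'm"
  tensA  :: "'b \<Rightarrow> 'b \<Rightarrow> 'b"
  munit  :: 'm
  lam    :: "'m \<Rightarrow> 'b"   lamI :: "'m \<Rightarrow> 'b"
  rho    :: "'m \<Rightarrow> 'b"   rhoI :: "'m \<Rightarrow> 'b"
  asc    :: "'m \<Rightarrow> 'm \<Rightarrow> 'm \<Rightarrow> 'b"   ascI :: "'m \<Rightarrow> 'm \<Rightarrow> 'm \<Rightarrow> 'b"

definition monoidal_category :: "('m, 'b, 'z) moncat_scheme \<Rightarrow> bool" where
  "monoidal_category M \<longleftrightarrow> category M \<and>
     munit M \<in> ob M \<and>
     (\<forall>m\<in>ob M. \<forall>n\<in>ob M. tens M m n \<in> ob M) \<and>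
     (\<forall>m\<in>ob M. \<forall>m'\<in>ob M. \<forall>n\<in>ob M. \<forall>n'\<in>ob M. \<forall>k\<in>hom M m m'. \<forall>l\<in>hom M n n'.
        tensA M k l \<in> hom M (tens M m n) (tens M m' n')) \<and>
     (\<forall>m\<in>ob M. \<forall>n\<in>ob M. tensA M (idn M m) (idn M n) = idn M (tens M m n)) \<and>
     (\<forall>m\<in>ob M. \<forall>m'\<in>ob M. \<forall>m''\<in>ob M. \<forall>n\<in>ob M. \<forall>n'\<in>ob M. \<forall>n''\<in>ob M.
        \<forall>k\<in>hom M m m'. \<forall>k'\<in>hom M m' m''. \<forall>l\<in>hom M n n'. \<forall>l'\<in>hom M n' n''.
        tensA M (cmp M k k') (cmp M l l') = cmp M (tensA M k l) (tensA M k' l')) \<and>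
     (\<forall>m\<in>ob M. iso_pair M (lam M m) (lamI M m) (tens M (munit M) m) m) \<and>
     (\<forall>m\<in>ob M. iso_pair M (rho M m) (rhoI M m) (tens M m (munit M)) m) \<and>
     (\<forall>m\<in>ob M. \<forall>n\<in>ob M. \<forall>p\<in>ob M.
        iso_pair M (asc M m n p) (ascI M m n p) (tens M (tens M m n) p) (tens M m (tens M n p))) \<and>
     (\<forall>m\<in>ob M. \<forall>n\<in>ob M. \<forall>k\<in>hom M m n.
        cmp M (tensA M (idn M (munit M)) k) (lam M n) = cmp M (lam M m) k) \<and>
     (\<forall>m\<in>ob M. \<forall>n\<in>ob M. \<forall>k\<in>hom M m n.
        cmp M (tensA M k (idn M (munit M))) (rho M n) = cmp M (rho M m) k) \<and>
     (\<forall>m\<in>ob M. \<forall>m'\<in>ob M. \<forall>n\<in>ob M. \<forall>n'\<in>ob M. \<forall>p\<in>ob M. \<forall>p'\<in>ob M.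
        \<forall>k\<in>hom M m m'. \<forall>l\<in>hom M n n'. \<forall>j\<in>hom M p p'.
        cmp M (tensA M (tensA M k l) j) (asc M m' n' p') =
        cmp M (asc M m n p) (tensA M k (tensA M l j))) \<and>
     (\<forall>m\<in>ob M. \<forall>n\<in>ob M. \<forall>p\<in>ob M. \<forall>q\<in>ob M.
        cmp M (asc M (tens M m n) p q) (asc M m n (tens M p q)) =
        cmp M (cmp M (tensA M (asc M m n p) (idn M q)) (asc M m (tens M n p) q))
              (tensA M (idn M m) (asc M n p q))) \<and>
     (\<forall>m\<in>ob M. \<forall>n\<in>ob M.
        cmp M (asc M m (munit M) n) (tensA M (idn M m) (lam M n)) =
        tensA M (rho M m) (idn M n))"

record ('m, 'b, 'o, 'a) actg =
  act   :: "'m \<Rightarrow> 'o \<Rightarrow> 'o"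
  actA  :: "'b \<Rightarrow> 'a \<Rightarrow> 'a"
  alam  :: "'o \<Rightarrow> 'a"   alamI :: "'o \<Rightarrow> 'a"
  aasc  :: "'m \<Rightarrow> 'm \<Rightarrow> 'o \<Rightarrow> 'a"   aascI :: "'m \<Rightarrow> 'm \<Rightarrow> 'o \<Rightarrow> 'a"

definition actegory ::
  "('m, 'b, 'z) moncat_scheme \<Rightarrow> ('o, 'a, 'y) cat_scheme \<Rightarrow> ('m, 'b, 'o, 'a, 'w) actg_scheme \<Rightarrow> bool" where
  "actegory M C A \<longleftrightarrow> monoidal_category M \<and> category C \<and>
     (\<forall>m\<in>ob M. \<forall>c\<in>ob C. act A m c \<in> ob C) \<and>
     (\<forall>m\<in>ob M. \<forall>m'\<in>ob M. \<forall>c\<in>ob C. \<forall>c'\<in>ob C. \<forall>k\<in>hom M m m'. \<forall>g\<in>hom C c c'.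
        actA A k g \<in> hom C (act A m c) (act A m' c')) \<and>
     (\<forall>m\<in>ob M. \<forall>c\<in>ob C. actA A (idn M m) (idn C c) = idn C (act A m c)) \<and>
     (\<forall>m\<in>ob M. \<forall>m'\<in>ob M. \<forall>m''\<in>ob M. \<forall>c\<in>ob C. \<forall>c'\<in>ob C. \<forall>c''\<in>ob C.
        \<forall>k\<in>hom M m m'. \<forall>k'\<in>hom M m' m''. \<forall>g\<in>hom C c c'. \<forall>g'\<in>hom C c' c''.
        actA A (cmp M k k') (cmp C g g') = cmp C (actA A k g) (actA A k' g')) \<and>
     (\<forall>c\<in>ob C. iso_pair C (alam A c) (alamI A c) (act A (munit M) c) c) \<and>
     (\<forall>m\<in>ob M. \<forall>n\<in>ob M. \<forall>c\<in>ob C.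
        iso_pair C (aasc A m n c) (aascI A m n c) (act A (tens M m n) c) (act A m (act A n c))) \<and>
     (\<forall>c\<in>ob C. \<forall>c'\<in>ob C. \<forall>g\<in>hom C c c'.
        cmp C (actA A (idn M (munit M)) g) (alam A c') = cmp C (alam A c) g) \<and>
     (\<forall>m\<in>ob M. \<forall>m'\<in>ob M. \<forall>n\<in>ob M. \<forall>n'\<in>ob M. \<forall>c\<in>ob C. \<forall>c'\<in>ob C.
        \<forall>k\<in>hom M m m'. \<forall>l\<in>hom M n n'. \<forall>g\<in>hom C c c'.
        cmp C (actA A (tensA M k l) g) (aasc A m' n' c') =
        cmp C (aasc A m n c) (actA A k (actA A l g))) \<and>
     (\<forall>m\<in>ob M. \<forall>n\<in>ob M. \<forall>p\<in>ob M. \<forall>c\<in>ob C.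
        cmp C (aasc A (tens M m n) p c) (aasc A m n (act A p c)) =
        cmp C (cmp C (actA A (asc M m n p) (idn C c)) (aasc A m (tens M n p) c))
              (actA A (idn M m) (aasc A n p c))) \<and>
     (\<forall>m\<in>ob M. \<forall>c\<in>ob C.
        cmp C (aasc A m (munit M) c) (actA A (idn M m) (alam A c)) =
        actA A (rho M m) (idn C c)) \<and>
     (\<forall>m\<in>ob M. \<forall>c\<in>ob C.
        cmp C (aasc A (munit M) m c) (alam A (act A m c)) =
        actA A (lam M m) (idn C c))"

text \<open>A family theta c n : C(c, n.x) -> C(c, n.y) is a 2-cell R_x => R_y in Tamb_{C,M}:
  it is natural in c (contravariant) and n (covariant), and preserves the strengths
  h |-> (m.h) ; a^{-1}_{m,n,x}.\<close>

definition R_2cell ::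
  "('m, 'b, 'z) moncat_scheme \<Rightarrow> ('o, 'a, 'y) cat_scheme \<Rightarrow> ('m, 'b, 'o, 'a, 'w) actg_scheme \<Rightarrow>
   'o \<Rightarrow> 'o \<Rightarrow> ('o \<Rightarrow> 'm \<Rightarrow> 'a \<Rightarrow> 'a) \<Rightarrow> bool" where
  "R_2cell M C A x y \<theta> \<longleftrightarrow>
     (\<forall>c\<in>ob C. \<forall>n\<in>ob M. \<forall>h\<in>hom C c (act A n x). \<theta> c n h \<in> hom C c (act A n y)) \<and>
     (\<forall>c\<in>ob C. \<forall>c'\<in>ob C. \<forall>n\<in>ob M. \<forall>n'\<in>ob M.
        \<forall>g\<in>hom C c' c. \<forall>k\<in>hom M n n'. \<forall>h\<in>hom C c (act A n x).
        \<theta> c' n' (cmp C (cmp C g h) (actA A k (idn C x))) =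
        cmp C (cmp C g (\<theta> c n h)) (actA A k (idn C y))) \<and>
     (\<forall>m\<in>ob M. \<forall>c\<in>ob C. \<forall>n\<in>ob M. \<forall>h\<in>hom C c (act A n x).
        \<theta> (act A m c) (tens M m n) (cmp C (actA A (idn M m) h) (aascI A m n x)) =
        cmp C (actA A (idn M m) (\<theta> c n h)) (aascI A m n y))"

definition R_of ::
  "('m, 'b, 'z) moncat_scheme \<Rightarrow> ('o, 'a, 'y) cat_scheme \<Rightarrow> ('m, 'b, 'o, 'a, 'w) actg_scheme \<Rightarrow>
   'a \<Rightarrow> 'o \<Rightarrow> 'm \<Rightarrow> 'a \<Rightarrow> 'a" where
  "R_of M C A f c n h = cmp C h (actA A (idn M n) f)"

text \<open>A family theta n c : C(n.y, c) -> C(n.x, c) is a 2-cell L_y => L_x in Tamb_{M,C}: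
  natural in n (contravariant) and c (covariant), preserving the strengths
  h |-> a_{m,n,-} ; (m.h).\<close>

definition L_2cell ::
  "('m, 'b, 'z) moncat_scheme \<Rightarrow> ('o, 'a, 'y) cat_scheme \<Rightarrow> ('m, 'b, 'o, 'a, 'w) actg_scheme \<Rightarrow>
   'o \<Rightarrow> 'o \<Rightarrow> ('m \<Rightarrow> 'o \<Rightarrow> 'a \<Rightarrow> 'a) \<Rightarrow> bool" where
  "L_2cell M C A y x \<theta> \<longleftrightarrow>
     (\<forall>n\<in>ob M. \<forall>c\<in>ob C. \<forall>h\<in>hom C (act A n y) c. \<theta> n c h \<in> hom C (act A n x) c) \<and>
     (\<forall>n\<in>ob M. \<forall>n'\<in>ob M. \<forall>c\<in>ob C. \<forall>c'\<in>ob C.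
        \<forall>k\<in>hom M n' n. \<forall>g\<in>hom C c c'. \<forall>h\<in>hom C (act A n y) c.
        \<theta> n' c' (cmp C (cmp C (actA A k (idn C y)) h) g) =
        cmp C (cmp C (actA A k (idn C x)) (\<theta> n c h)) g) \<and>
     (\<forall>m\<in>ob M. \<forall>n\<in>ob M. \<forall>c\<in>ob C. \<forall>h\<in>hom C (act A n y) c.
        \<theta> (tens M m n) (act A m c) (cmp C (aasc A m n y) (actA A (idn M m) h)) =
        cmp C (aasc A m n x) (actA A (idn M m) (\<theta> n c h)))"

definition L_of ::
  "('m, 'b, 'z) moncat_scheme \<Rightarrow> ('o, 'a, 'y) cat_scheme \<Rightarrow> ('m, 'b, 'o, 'a, 'w) actg_scheme \<Rightarrow>
   'a \<Rightarrow> 'm \<Rightarrow> 'o \<Rightarrow> 'a \<Rightarrow> 'a" where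
  "L_of M C A f n c h = cmp C (actA A (idn M n) f) h"

end

theory Submission
  imports Defs
begin

locale actx =
  fixes M :: "('m, 'b, 'z) moncat_scheme" and C :: "('o, 'a, 'y) cat_scheme"
    and A :: "('m, 'b, 'o, 'a, 'w) actg_scheme"
  assumes act: "actegory M C A"
begin

lemma mon: "monoidal_category M" using act unfolding actegory_def by auto
lemma catC: "category C" using act unfolding actegory_def by auto
lemma catM: "category M" using mon unfolding monoidal_category_def by auto

lemma C_obs: "f \<in> hom C a b \<Longrightarrow> a \<in> ob C \<and> b \<in> ob C"
  using catC unfolding category_def by (metis empty_iff)
lemma M_obs: "f \<in> hom M a b \<Longrightarrow> a \<in> ob M \<and> b \<in> ob M"
  using catM unfolding category_def by (metis empty_iff)

lemma C_comp: "f \<in> hom C a b \<Longrightarrow> g \<in> hom C b c \<Longrightarrow> cmp C f g \<in> hom C a c"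
  using catC C_obs unfolding category_def by metis
lemma C_id: "a \<in> ob C \<Longrightarrow> idn C a \<in> hom C a a"
  using catC unfolding category_def by blast
lemma C_idl: "f \<in> hom C a b \<Longrightarrow> cmp C (idn C a) f = f"
  using catC C_obs unfolding category_def by metis
lemma C_idr: "f \<in> hom C a b \<Longrightarrow> cmp C f (idn C b) = f"
  using catC C_obs unfolding category_def by metis
lemma C_assoc: "f \<in> hom C a b \<Longrightarrow> g \<in> hom C b c \<Longrightarrow> h \<in> hom C c d \<Longrightarrow>
   cmp C (cmp C f g) h = cmp C f (cmp C g h)"
proof -
  assume a: "f \<in> hom C a b" "g \<in> hom C b c" "h \<in> hom C c d"
  then have "a \<in> ob C" "b \<in> ob C" "c \<in> ob C" "d \<in> ob C" using C_obs by blast+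
  with a show ?thesis using catC unfolding category_def by blast
qed
lemma M_id: "a \<in> ob M \<Longrightarrow> idn M a \<in> hom M a a"
  using catM unfolding category_def by blast
lemma M_idl: "f \<in> hom M a b \<Longrightarrow> cmp M (idn M a) f = f"
  using catM M_obs unfolding category_def by metis

lemma unit_ob: "munit M \<in> ob M" using mon unfolding monoidal_category_def by auto
lemma tens_ob: "m \<in> ob M \<Longrightarrow> n \<in> ob M \<Longrightarrow> tens M m n \<in> ob M"
  using mon unfolding monoidal_category_def by auto
lemma rho_iso: "m \<in> ob M \<Longrightarrow> iso_pair M (rho M m) (rhoI M m) (tens M m (munit M)) m"
  using mon unfolding monoidal_category_def by auto

lemma act_ob: "m \<in> ob M \<Longrightarrow> c \<in> ob C \<Longrightarrow> act A m c \<in> ob C"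
  using act unfolding actegory_def by auto
lemma actA_hom: "k \<in> hom M m m' \<Longrightarrow> g \<in> hom C c c' \<Longrightarrow> actA A k g \<in> hom C (act A m c) (act A m' c')"
proof -
  assume a: "k \<in> hom M m m'" "g \<in> hom C c c'"
  then have "m \<in> ob M" "m' \<in> ob M" "c \<in> ob C" "c' \<in> ob C" using C_obs M_obs by blast+
  with a show ?thesis using act unfolding actegory_def by auto
qed
lemma actA_id: "m \<in> ob M \<Longrightarrow> c \<in> ob C \<Longrightarrow> actA A (idn M m) (idn C c) = idn C (act A m c)"
  using act unfolding actegory_def by auto
lemma actA_cmp: "k \<in> hom M m m' \<Longrightarrow> k' \<in> hom M m' m'' \<Longrightarrow> g \<in> hom C c c' \<Longrightarrow> g' \<in> hom C c' c'' \<Longrightarrow>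
   actA A (cmp M k k') (cmp C g g') = cmp C (actA A k g) (actA A k' g')"
proof -
  assume a: "k \<in> hom M m m'" "k' \<in> hom M m' m''" "g \<in> hom C c c'" "g' \<in> hom C c' c''"
  then have "m \<in> ob M" "m' \<in> ob M" "m'' \<in> ob M" "c \<in> ob C" "c' \<in> ob C" "c'' \<in> ob C"
    using C_obs M_obs by blast+
  with a show ?thesis using act unfolding actegory_def by auto
qed
lemma alam_iso: "c \<in> ob C \<Longrightarrow> iso_pair C (alam A c) (alamI A c) (act A (munit M) c) c"
  using act unfolding actegory_def by auto
lemma aasc_iso: "m \<in> ob M \<Longrightarrow> n \<in> ob M \<Longrightarrow> c \<in> ob C \<Longrightarrow>
   iso_pair C (aasc A m n c) (aascI A m n c) (act A (tens M m n) c) (act A m (act A n c))"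
  using act unfolding actegory_def by auto
lemma alam_nat: "g \<in> hom C c c' \<Longrightarrow>
   cmp C (actA A (idn M (munit M)) g) (alam A c') = cmp C (alam A c) g"
proof -
  assume a: "g \<in> hom C c c'"
  then have "c \<in> ob C" "c' \<in> ob C" using C_obs by blast+
  with a show ?thesis using act unfolding actegory_def by auto
qed
lemma triangle: "m \<in> ob M \<Longrightarrow> c \<in> ob C \<Longrightarrow>
   cmp C (aasc A m (munit M) c) (actA A (idn M m) (alam A c)) = actA A (rho M m) (idn C c)"
  using act unfolding actegory_def by auto

lemma actA_idn_cmp: "n \<in> ob M \<Longrightarrow> g \<in> hom C c c' \<Longrightarrow> g' \<in> hom C c' c'' \<Longrightarrow>
   actA A (idn M n) (cmp C g g') = cmp C (actA A (idn M n) g) (actA A (idn M n) g')"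
proof -
  assume a: "n \<in> ob M" "g \<in> hom C c c'" "g' \<in> hom C c' c''"
  have "cmp M (idn M n) (idn M n) = idn M n" using M_idl M_id a by blast
  then show ?thesis using actA_cmp[OF M_id[OF a(1)] M_id[OF a(1)] a(2) a(3)] by simp
qed

lemma alam_facts:
  assumes "c \<in> ob C"
  shows "alam A c \<in> hom C (act A (munit M) c) c" "alamI A c \<in> hom C c (act A (munit M) c)"
    "cmp C (alam A c) (alamI A c) = idn C (act A (munit M) c)" "cmp C (alamI A c) (alam A c) = idn C c"
  using alam_iso[OF assms] unfolding iso_pair_def by auto

lemma aasc_facts:
  assumes "m \<in> ob M" "n \<in> ob M" "c \<in> ob C"
  shows "aasc A m n c \<in> hom C (act A (tens M m n) c) (act A m (act A n c))"
    "aascI A m n c \<in> hom C (act A m (act A n c)) (act A (tens M m n) c)"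
    "cmp C (aasc A m n c) (aascI A m n c) = idn C (act A (tens M m n) c)"
    "cmp C (aascI A m n c) (aasc A m n c) = idn C (act A m (act A n c))"
  using aasc_iso[OF assms] unfolding iso_pair_def by auto

lemma rho_facts:
  assumes "m \<in> ob M"
  shows "rho M m \<in> hom M (tens M m (munit M)) m" "rhoI M m \<in> hom M m (tens M m (munit M))"
    "cmp M (rho M m) (rhoI M m) = idn M (tens M m (munit M))" "cmp M (rhoI M m) (rho M m) = idn M m"
  using rho_iso[OF assms] unfolding iso_pair_def by auto

lemma tri_inv:
  assumes n: "n \<in> ob M" and c: "c \<in> ob C"
  shows "cmp C (aascI A n (munit M) c) (actA A (rho M n) (idn C c)) = actA A (idn M n) (alam A c)"
proof -
  have I: "munit M \<in> ob M" by (rule unit_ob)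
  note af = aasc_facts[OF n I c]
  have h1: "actA A (idn M n) (alam A c) \<in> hom C (act A n (act A (munit M) c)) (act A n c)"
    using actA_hom[OF M_id[OF n] alam_facts(1)[OF c]] .
  have "cmp C (aascI A n (munit M) c) (actA A (rho M n) (idn C c))
      = cmp C (aascI A n (munit M) c) (cmp C (aasc A n (munit M) c) (actA A (idn M n) (alam A c)))"
    using triangle[OF n c] by simp
  also have "\<dots> = cmp C (cmp C (aascI A n (munit M) c) (aasc A n (munit M) c)) (actA A (idn M n) (alam A c))"
    using C_assoc[OF af(2) af(1) h1] by simp
  also have "\<dots> = actA A (idn M n) (alam A c)" using af(4) C_idl[OF h1] by simp
  finally show ?thesis .
qed

lemma tri_inv2:
  assumes n: "n \<in> ob M" and c: "c \<in> ob C"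
  shows "cmp C (actA A (rhoI M n) (idn C c)) (aasc A n (munit M) c) = actA A (idn M n) (alamI A c)"
proof -
  have I: "munit M \<in> ob M" by (rule unit_ob)
  note af = aasc_facts[OF n I c]
  note lf = alam_facts[OF c]
  note rf = rho_facts[OF n]
  have h1: "actA A (idn M n) (alam A c) \<in> hom C (act A n (act A (munit M) c)) (act A n c)"
    using actA_hom[OF M_id[OF n] lf(1)] .
  have h2: "actA A (idn M n) (alamI A c) \<in> hom C (act A n c) (act A n (act A (munit M) c))"
    using actA_hom[OF M_id[OF n] lf(2)] .
  have h3: "actA A (rhoI M n) (idn C c) \<in> hom C (act A n c) (act A (tens M n (munit M)) c)"
    using actA_hom[OF rf(2) C_id[OF c]] .
  have h4: "actA A (rho M n) (idn C c) \<in> hom C (act A (tens M n (munit M)) c) (act A n c)"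
    using actA_hom[OF rf(1) C_id[OF c]] .
  have e1: "cmp C h1' h2' = idn C (act A n (act A (munit M) c))"
    if "h1' = actA A (idn M n) (alam A c)" "h2' = actA A (idn M n) (alamI A c)" for h1' h2'
    using that actA_idn_cmp[OF n lf(1) lf(2), symmetric] lf(3) actA_id[OF n act_ob[OF I c]] by simp
  have e2: "cmp C (actA A (rhoI M n) (idn C c)) (actA A (rho M n) (idn C c)) = idn C (act A n c)"
    using actA_cmp[OF rf(2) rf(1) C_id[OF c] C_id[OF c], symmetric] rf(4) C_idl[OF C_id[OF c]]
      actA_id[OF n c] by simp
  have "cmp C (actA A (rhoI M n) (idn C c)) (aasc A n (munit M) c)
     = cmp C (cmp C (actA A (rhoI M n) (idn C c)) (aasc A n (munit M) c)) (idn C (act A n (act A (munit M) c)))"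
    using C_idr[OF C_comp[OF h3 af(1)]] by simp
  also have "\<dots> = cmp C (cmp C (actA A (rhoI M n) (idn C c)) (aasc A n (munit M) c))
                  (cmp C (actA A (idn M n) (alam A c)) (actA A (idn M n) (alamI A c)))"
    using e1 by simp
  also have "\<dots> = cmp C (cmp C (cmp C (actA A (rhoI M n) (idn C c)) (aasc A n (munit M) c))
                  (actA A (idn M n) (alam A c))) (actA A (idn M n) (alamI A c))"
    using C_assoc[OF C_comp[OF h3 af(1)] h1 h2] by simp
  also have "\<dots> = cmp C (cmp C (actA A (rhoI M n) (idn C c)) (actA A (rho M n) (idn C c)))
                  (actA A (idn M n) (alamI A c))"
    using C_assoc[OF h3 af(1) h1] triangle[OF n c] by simp
  also have "\<dots> = actA A (idn M n) (alamI A c)" using e2 C_idl[OF h2] by simp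
  finally show ?thesis .
qed

lemma R_part:
  assumes x: "x \<in> ob C" and y: "y \<in> ob C" and th: "R_2cell M C A x y \<theta>"
  shows "\<exists>!f. f \<in> hom C x y \<and>
    (\<forall>c\<in>ob C. \<forall>n\<in>ob M. \<forall>h\<in>hom C c (act A n x). \<theta> c n h = R_of M C A f c n h)"
proof -
  have I: "munit M \<in> ob M" by (rule unit_ob)
  have T: "\<And>c n h. c \<in> ob C \<Longrightarrow> n \<in> ob M \<Longrightarrow> h \<in> hom C c (act A n x) \<Longrightarrow> \<theta> c n h \<in> hom C c (act A n y)"
    using th unfolding R_2cell_def by blast
  have N: "\<And>c c' n n' g k h. c\<in>ob C \<Longrightarrow> c'\<in>ob C \<Longrightarrow> n\<in>ob M \<Longrightarrow> n'\<in>ob M \<Longrightarrow>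
        g\<in>hom C c' c \<Longrightarrow> k\<in>hom M n n' \<Longrightarrow> h\<in>hom C c (act A n x) \<Longrightarrow>
        \<theta> c' n' (cmp C (cmp C g h) (actA A k (idn C x))) =
        cmp C (cmp C g (\<theta> c n h)) (actA A k (idn C y))"
    using th unfolding R_2cell_def by blast
  have S: "\<And>m c n h. m\<in>ob M \<Longrightarrow> c\<in>ob C \<Longrightarrow> n\<in>ob M \<Longrightarrow> h\<in>hom C c (act A n x) \<Longrightarrow>
        \<theta> (act A m c) (tens M m n) (cmp C (actA A (idn M m) h) (aascI A m n x)) =
        cmp C (actA A (idn M m) (\<theta> c n h)) (aascI A m n y)"
    using th unfolding R_2cell_def by blast
  define t where "t = \<theta> x (munit M) (alamI A x)"
  have t: "t \<in> hom C x (act A (munit M) y)" unfolding t_def using T[OF x I alam_facts(2)[OF x]] .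
  define f where "f = cmp C t (alam A y)"
  have f: "f \<in> hom C x y" unfolding f_def using C_comp[OF t alam_facts(1)[OF y]] .
  have key: "\<theta> (act A n x) n (idn C (act A n x)) = actA A (idn M n) f" if n: "n \<in> ob M" for n
  proof -
    note rf = rho_facts[OF n]
    note afx = aasc_facts[OF n I x] and afy = aasc_facts[OF n I y]
    have nI: "tens M n (munit M) \<in> ob M" using tens_ob[OF n I] .
    have nx: "act A n x \<in> ob C" using act_ob[OF n x] .
    have Ix: "act A (munit M) x \<in> ob C" using act_ob[OF I x] .
    define h where "h = cmp C (actA A (idn M n) (alamI A x)) (aascI A n (munit M) x)"
    have hn: "actA A (idn M n) (alamI A x) \<in> hom C (act A n x) (act A n (act A (munit M) x))"
      using actA_hom[OF M_id[OF n] alam_facts(2)[OF x]] .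
    have hh: "h \<in> hom C (act A n x) (act A (tens M n (munit M)) x)"
      unfolding h_def using C_comp[OF hn afx(2)] .
    have r1: "actA A (rho M n) (idn C x) \<in> hom C (act A (tens M n (munit M)) x) (act A n x)"
      using actA_hom[OF rf(1) C_id[OF x]] .
    have lx: "actA A (idn M n) (alam A x) \<in> hom C (act A n (act A (munit M) x)) (act A n x)"
      using actA_hom[OF M_id[OF n] alam_facts(1)[OF x]] .
    have "cmp C (cmp C (idn C (act A n x)) h) (actA A (rho M n) (idn C x))
        = cmp C h (actA A (rho M n) (idn C x))" using C_idl[OF hh] by simp
    also have "\<dots> = cmp C (actA A (idn M n) (alamI A x))
        (cmp C (aascI A n (munit M) x) (actA A (rho M n) (idn C x)))"
      unfolding h_def using C_assoc[OF hn afx(2) r1] .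
    also have "\<dots> = cmp C (actA A (idn M n) (alamI A x)) (actA A (idn M n) (alam A x))"
      using tri_inv[OF n x] by simp
    also have "\<dots> = idn C (act A n x)"
      using actA_idn_cmp[OF n alam_facts(2)[OF x] alam_facts(1)[OF x], symmetric]
        alam_facts(4)[OF x] actA_id[OF n x] by simp
    finally have L: "cmp C (cmp C (idn C (act A n x)) h) (actA A (rho M n) (idn C x)) = idn C (act A n x)" .
    have N1: "\<theta> (act A n x) n (cmp C (cmp C (idn C (act A n x)) h) (actA A (rho M n) (idn C x))) =
        cmp C (cmp C (idn C (act A n x)) (\<theta> (act A n x) (tens M n (munit M)) h)) (actA A (rho M n) (idn C y))"
      using N[OF nx nx nI n C_id[OF nx] rf(1) hh] .
    have S1: "\<theta> (act A n x) (tens M n (munit M)) h =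
        cmp C (actA A (idn M n) t) (aascI A n (munit M) y)"
      unfolding h_def t_def using S[OF n x I alam_facts(2)[OF x]] .
    have tn: "actA A (idn M n) t \<in> hom C (act A n x) (act A n (act A (munit M) y))"
      using actA_hom[OF M_id[OF n] t] .
    have r1y: "actA A (rho M n) (idn C y) \<in> hom C (act A (tens M n (munit M)) y) (act A n y)"
      using actA_hom[OF rf(1) C_id[OF y]] .
    have "cmp C (cmp C (idn C (act A n x)) (\<theta> (act A n x) (tens M n (munit M)) h)) (actA A (rho M n) (idn C y))
       = cmp C (cmp C (actA A (idn M n) t) (aascI A n (munit M) y)) (actA A (rho M n) (idn C y))"
      using S1 C_idl[OF C_comp[OF tn afy(2)]] by simp
    also have "\<dots> = cmp C (actA A (idn M n) t) (actA A (idn M n) (alam A y))"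
      using C_assoc[OF tn afy(2) r1y] tri_inv[OF n y] by simp
    also have "\<dots> = actA A (idn M n) f"
      unfolding f_def using actA_idn_cmp[OF n t alam_facts(1)[OF y]] by simp
    finally show ?thesis using N1 L by simp
  qed
  have ex: "\<forall>c\<in>ob C. \<forall>n\<in>ob M. \<forall>h\<in>hom C c (act A n x). \<theta> c n h = R_of M C A f c n h"
  proof (intro ballI)
    fix c n h assume c: "c \<in> ob C" and n: "n \<in> ob M" and h: "h \<in> hom C c (act A n x)"
    have nx: "act A n x \<in> ob C" using act_ob[OF n x] .
    have N1: "\<theta> c n (cmp C (cmp C h (idn C (act A n x))) (actA A (idn M n) (idn C x))) =
        cmp C (cmp C h (\<theta> (act A n x) n (idn C (act A n x)))) (actA A (idn M n) (idn C y))"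
      using N[OF nx c n n h M_id[OF n] C_id[OF nx]] .
    have nf: "actA A (idn M n) f \<in> hom C (act A n x) (act A n y)" using actA_hom[OF M_id[OF n] f] .
    show "\<theta> c n h = R_of M C A f c n h"
      using N1 key[OF n] actA_id[OF n x] actA_id[OF n y] C_idr[OF h] C_idr[OF C_comp[OF h nf]]
      unfolding R_of_def by simp
  qed
  show ?thesis
  proof (rule ex1I[where a = f])
    show "f \<in> hom C x y \<and> (\<forall>c\<in>ob C. \<forall>n\<in>ob M. \<forall>h\<in>hom C c (act A n x). \<theta> c n h = R_of M C A f c n h)"
      using f ex by blast
  next
    fix g assume g: "g \<in> hom C x y \<and> (\<forall>c\<in>ob C. \<forall>n\<in>ob M. \<forall>h\<in>hom C c (act A n x). \<theta> c n h = R_of M C A g c n h)"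
    then have gh: "g \<in> hom C x y" by blast
    have "t = cmp C (alamI A x) (actA A (idn M (munit M)) g)"
      using g x I alam_facts(2)[OF x] unfolding t_def R_of_def by blast
    then have "f = cmp C (cmp C (alamI A x) (actA A (idn M (munit M)) g)) (alam A y)"
      unfolding f_def by simp
    also have "\<dots> = cmp C (alamI A x) (cmp C (alam A x) g)"
      using C_assoc[OF alam_facts(2)[OF x] actA_hom[OF M_id[OF I] gh] alam_facts(1)[OF y]]
        alam_nat[OF gh] by simp
    also have "\<dots> = g"
      using C_assoc[OF alam_facts(2)[OF x] alam_facts(1)[OF x] gh, symmetric] alam_facts(4)[OF x] C_idl[OF gh]
      by simp
    finally show "g = f" by simp
  qed
qed

lemma L_part:
  assumes x: "x \<in> ob C" and y: "y \<in> ob C" and th: "L_2cell M C A y x \<theta>"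
  shows "\<exists>!f. f \<in> hom C x y \<and>
    (\<forall>n\<in>ob M. \<forall>c\<in>ob C. \<forall>h\<in>hom C (act A n y) c. \<theta> n c h = L_of M C A f n c h)"
proof -
  have I: "munit M \<in> ob M" by (rule unit_ob)
  have T: "\<And>n c h. n \<in> ob M \<Longrightarrow> c \<in> ob C \<Longrightarrow> h \<in> hom C (act A n y) c \<Longrightarrow> \<theta> n c h \<in> hom C (act A n x) c"
    using th unfolding L_2cell_def by blast
  have N: "\<And>n n' c c' k g h. n\<in>ob M \<Longrightarrow> n'\<in>ob M \<Longrightarrow> c\<in>ob C \<Longrightarrow> c'\<in>ob C \<Longrightarrow>
        k\<in>hom M n' n \<Longrightarrow> g\<in>hom C c c' \<Longrightarrow> h\<in>hom C (act A n y) c \<Longrightarrow>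
        \<theta> n' c' (cmp C (cmp C (actA A k (idn C y)) h) g) =
        cmp C (cmp C (actA A k (idn C x)) (\<theta> n c h)) g"
    using th unfolding L_2cell_def by blast
  have S: "\<And>m n c h. m\<in>ob M \<Longrightarrow> n\<in>ob M \<Longrightarrow> c\<in>ob C \<Longrightarrow> h\<in>hom C (act A n y) c \<Longrightarrow>
        \<theta> (tens M m n) (act A m c) (cmp C (aasc A m n y) (actA A (idn M m) h)) =
        cmp C (aasc A m n x) (actA A (idn M m) (\<theta> n c h))"
    using th unfolding L_2cell_def by blast
  define t where "t = \<theta> (munit M) y (alam A y)"
  have t: "t \<in> hom C (act A (munit M) x) y" unfolding t_def using T[OF I y alam_facts(1)[OF y]] .
  define f where "f = cmp C (alamI A x) t"
  have f: "f \<in> hom C x y" unfolding f_def using C_comp[OF alam_facts(2)[OF x] t] .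
  have key: "\<theta> n (act A n y) (idn C (act A n y)) = actA A (idn M n) f" if n: "n \<in> ob M" for n
  proof -
    note rf = rho_facts[OF n]
    note afx = aasc_facts[OF n I x] and afy = aasc_facts[OF n I y]
    have nI: "tens M n (munit M) \<in> ob M" using tens_ob[OF n I] .
    have ny: "act A n y \<in> ob C" using act_ob[OF n y] .
    have ry: "actA A (rho M n) (idn C y) \<in> hom C (act A (tens M n (munit M)) y) (act A n y)"
      using actA_hom[OF rf(1) C_id[OF y]] .
    have rIy: "actA A (rhoI M n) (idn C y) \<in> hom C (act A n y) (act A (tens M n (munit M)) y)"
      using actA_hom[OF rf(2) C_id[OF y]] .
    have rIx: "actA A (rhoI M n) (idn C x) \<in> hom C (act A n x) (act A (tens M n (munit M)) x)"
      using actA_hom[OF rf(2) C_id[OF x]] .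
    have S1: "\<theta> (tens M n (munit M)) (act A n y) (actA A (rho M n) (idn C y)) =
        cmp C (aasc A n (munit M) x) (actA A (idn M n) t)"
      using S[OF n I y alam_facts(1)[OF y]] triangle[OF n y] unfolding t_def by simp
    have N1: "\<theta> n (act A n y) (cmp C (cmp C (actA A (rhoI M n) (idn C y)) (actA A (rho M n) (idn C y))) (idn C (act A n y))) =
       cmp C (cmp C (actA A (rhoI M n) (idn C x)) (\<theta> (tens M n (munit M)) (act A n y) (actA A (rho M n) (idn C y)))) (idn C (act A n y))"
      using N[OF nI n ny ny rf(2) C_id[OF ny] ry] .
    have e2: "cmp C (actA A (rhoI M n) (idn C y)) (actA A (rho M n) (idn C y)) = idn C (act A n y)"
      using actA_cmp[OF rf(2) rf(1) C_id[OF y] C_id[OF y], symmetric] rf(4) C_idl[OF C_id[OF y]]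
        actA_id[OF n y] by simp
    have tn: "actA A (idn M n) t \<in> hom C (act A n (act A (munit M) x)) (act A n y)"
      using actA_hom[OF M_id[OF n] t] .
    have "cmp C (cmp C (actA A (rhoI M n) (idn C x)) (\<theta> (tens M n (munit M)) (act A n y) (actA A (rho M n) (idn C y)))) (idn C (act A n y))
       = cmp C (actA A (rhoI M n) (idn C x)) (cmp C (aasc A n (munit M) x) (actA A (idn M n) t))"
      using S1 C_idr[OF C_comp[OF rIx C_comp[OF afx(1) tn]]] by simp
    also have "\<dots> = cmp C (actA A (idn M n) (alamI A x)) (actA A (idn M n) t)"
      using C_assoc[OF rIx afx(1) tn, symmetric] tri_inv2[OF n x] by simp
    also have "\<dots> = actA A (idn M n) f"
      unfolding f_def using actA_idn_cmp[OF n alam_facts(2)[OF x] t] by simp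
    finally show ?thesis using N1 e2 C_idl[OF C_id[OF ny]] by simp
  qed
  have ex: "\<forall>n\<in>ob M. \<forall>c\<in>ob C. \<forall>h\<in>hom C (act A n y) c. \<theta> n c h = L_of M C A f n c h"
  proof (intro ballI)
    fix n c h assume n: "n \<in> ob M" and c: "c \<in> ob C" and h: "h \<in> hom C (act A n y) c"
    have ny: "act A n y \<in> ob C" using act_ob[OF n y] .
    have N1: "\<theta> n c (cmp C (cmp C (actA A (idn M n) (idn C y)) (idn C (act A n y))) h) =
        cmp C (cmp C (actA A (idn M n) (idn C x)) (\<theta> n (act A n y) (idn C (act A n y)))) h"
      using N[OF n n ny c M_id[OF n] h C_id[OF ny]] .
    have nf: "actA A (idn M n) f \<in> hom C (act A n x) (act A n y)" using actA_hom[OF M_id[OF n] f] .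
    show "\<theta> n c h = L_of M C A f n c h"
      using N1 key[OF n] actA_id[OF n x] actA_id[OF n y] C_idl[OF h] C_idl[OF C_id[OF ny]] C_idl[OF nf]
      unfolding L_of_def by simp
  qed
  show ?thesis
  proof (rule ex1I[where a = f])
    show "f \<in> hom C x y \<and> (\<forall>n\<in>ob M. \<forall>c\<in>ob C. \<forall>h\<in>hom C (act A n y) c. \<theta> n c h = L_of M C A f n c h)"
      using f ex by blast
  next
    fix g assume g: "g \<in> hom C x y \<and> (\<forall>n\<in>ob M. \<forall>c\<in>ob C. \<forall>h\<in>hom C (act A n y) c. \<theta> n c h = L_of M C A g n c h)"
    then have gh: "g \<in> hom C x y" by blast
    have "t = cmp C (actA A (idn M (munit M)) g) (alam A y)"
      using g y I alam_facts(1)[OF y] unfolding t_def L_of_def by blast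
    then have "f = cmp C (alamI A x) (cmp C (alam A x) g)"
      unfolding f_def using alam_nat[OF gh] by simp
    also have "\<dots> = g"
      using C_assoc[OF alam_facts(2)[OF x] alam_facts(1)[OF x] gh, symmetric] alam_facts(4)[OF x] C_idl[OF gh]
      by simp
    finally show "g = f" by simp
  qed
qed

end

theorem mainTheorem6:
  fixes M :: "('m, 'b) moncat" and C :: "('o, 'a) cat" and A :: "('m, 'b, 'o, 'a) actg"
  assumes "actegory M C A" and "x \<in> ob C" and "y \<in> ob C"
  shows "(\<forall>\<theta>. R_2cell M C A x y \<theta> \<longrightarrow>
            (\<exists>!f. f \<in> hom C x y \<and>
               (\<forall>c\<in>ob C. \<forall>n\<in>ob M. \<forall>h\<in>hom C c (act A n x). \<theta> c n h = R_of M C A f c n h))) \<and>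
         (\<forall>\<theta>. L_2cell M C A y x \<theta> \<longrightarrow>
            (\<exists>!f. f \<in> hom C x y \<and>
               (\<forall>n\<in>ob M. \<forall>c\<in>ob C. \<forall>h\<in>hom C (act A n y) c. \<theta> n c h = L_of M C A f n c h)))"
proof -
  interpret actx M C A using assms(1) by (unfold_locales)
  show ?thesis using R_part[OF assms(2,3)] L_part[OF assms(2,3)] by blast
qed

end
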